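(* Let $p$ be a prime and $d\ge0$ an integer. If $S_1,S_2\subseteq{\mathbb N}$ are both $p$-normal of order $\le d$, then $S_1\cap S_2$ is $p$-normal of order $\le d$.
   Context: ${\mathbb N}=\{0,1,2,\dots\}$. An infinite arithmetic progression is $m+n{\mathbb N}$ with $m\in{\mathbb N}$, $n\ge1$. Let $q$ be a power of $p$. For $r\ge1$ and $c_0,\dots,c_r\in{\mathbb Q}$ with $(q-1)c_i\in{\mathbb Z}$, $c_0+\cdots+c_r\in{\mathbb Z}$, $c_i\ne0$ for $1\le i\le r$ and $c_i>0$ for some $1\le i\le r$, the set $S_q(c_0;c_1,\dots,c_r)=\{c_0+\sum_{i=1}^rc_iq^{k_i}\mid k_i\in{\mathbb N}\}\cap{\mathbb N}$ is an elementary $p$-nested set of order $r$. A $p$-nested set of order $\le k$ is the union of a finite set and finitely many elementary $p$-nested sets (possibly for different powers $q$ of $p$) of orders $\le k$. A set $S\subseteq{\mathbb N}$ is $p$-normal of order $\le k$ if there are a $p$-nested set $B$ of order $\le k$ and finitely many infinite arithmetic progressions $A_1,\dots,A_s$ such that $S$ and $B\cup A_1\cup\cdots\cup A_s$ have finite symmetric difference. *)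

theory Defs
  imports Complex_Main "HOL-Computational_Algebra.Primes"
begin

definition Sq :: "nat \<Rightarrow> nat \<Rightarrow> (nat \<Rightarrow> rat) \<Rightarrow> nat set" where
  "Sq q r c = {n::nat. \<exists>ks::nat \<Rightarrow> nat.
      of_nat n = c 0 + (\<Sum>i=1..r. c i * of_nat q ^ ks i)}"

definition elem_p_nested :: "nat \<Rightarrow> nat \<Rightarrow> nat set \<Rightarrow> bool" where
  "elem_p_nested p r S \<longleftrightarrow> (\<exists>e q c. e \<ge> 1 \<and> q = p ^ e \<and> r \<ge> 1 \<and>
      (\<forall>i\<in>{0..r}. (of_nat q - 1) * c i \<in> \<int>) \<and>
      (\<Sum>i=0..r. c i) \<in> \<int> \<and>
      (\<forall>i\<in>{1..r}. c i \<noteq> 0) \<and>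
      (\<exists>i\<in>{1..r}. c i > 0) \<and>
      S = Sq q r c)"

definition p_nested :: "nat \<Rightarrow> nat \<Rightarrow> nat set \<Rightarrow> bool" where
  "p_nested p k B \<longleftrightarrow> (\<exists>F Ss. finite F \<and> finite Ss \<and>
      (\<forall>S\<in>Ss. \<exists>r\<le>k. elem_p_nested p r S) \<and> B = F \<union> \<Union>Ss)"

definition inf_arith_prog :: "nat set \<Rightarrow> bool" where
  "inf_arith_prog A \<longleftrightarrow> (\<exists>m n. n \<ge> 1 \<and> A = {m + n * j | j. True})"

definition p_normal :: "nat \<Rightarrow> nat \<Rightarrow> nat set \<Rightarrow> bool" where
  "p_normal p k S \<longleftrightarrow> (\<exists>B As. p_nested p k B \<and> finite As \<and>
      (\<forall>A\<in>As. inf_arith_prog A) \<and>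
      finite ((S - (B \<union> \<Union>As)) \<union> ((B \<union> \<Union>As) - S)))"

end

theory Submission
  imports Defs "HOL-Library.FuncSet"
begin

definition fam :: "nat \<Rightarrow> 'j set \<Rightarrow> rat \<Rightarrow> ('j \<Rightarrow> rat) \<Rightarrow> nat set" where
  "fam q J d0 d = {n::nat. \<exists>t::'j\<Rightarrow>nat. of_nat n = d0 + (\<Sum>i\<in>J. d i * of_nat q ^ t i)}"

definition good :: "nat \<Rightarrow> 'j set \<Rightarrow> rat \<Rightarrow> ('j \<Rightarrow> rat) \<Rightarrow> bool" where
  "good q J d0 d \<longleftrightarrow> (\<forall>j\<in>J. (of_nat q - 1) * d j \<in> \<int>) \<and> d0 + sum d J \<in> \<int>"

lemma shift_int:
  assumes "(of_nat q - 1) * (a::rat) \<in> \<int>"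
  shows "a * of_nat q ^ k - a \<in> \<int>"
proof -
  have e: "(of_nat q :: rat) ^ k - 1 = (of_nat q - 1) * (\<Sum>i<k. of_nat q ^ i)"
    by (rule power_diff_1_eq)
  have "a * of_nat q ^ k - a = a * ((of_nat q :: rat) ^ k - 1)" by (simp add: algebra_simps)
  also have "\<dots> = ((of_nat q - 1) * a) * (\<Sum>i<k. of_nat q ^ i)" by (simp only: e) (simp add: algebra_simps)
  also have "\<dots> \<in> \<int>" by (rule Ints_mult[OF assms Ints_sum]) auto
  finally show ?thesis .
qed

lemma good_val_int:
  assumes "good q J d0 d"
  shows "d0 + (\<Sum>i\<in>J. d i * of_nat q ^ t i) \<in> \<int>"
proof -
  have "d0 + (\<Sum>i\<in>J. d i * of_nat q ^ t i) = (d0 + sum d J) + (\<Sum>i\<in>J. d i * of_nat q ^ t i - d i)"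
    by (simp add: sum_subtractf)
  also have "\<dots> \<in> \<int>" using assms unfolding good_def
    by (intro Ints_add[OF conjunct2[OF assms[unfolded good_def]] Ints_sum] shift_int) auto
  finally show ?thesis .
qed

lemma good_d0:
  assumes "good q J d0 d" "finite J"
  shows "(of_nat q - 1) * d0 \<in> \<int>"
proof -
  have "(of_nat q - 1) * d0 = (of_nat q - 1) * (d0 + sum d J) - (\<Sum>j\<in>J. (of_nat q - 1) * d j)"
    using sum_distrib_left[of "of_nat q - 1" d J, symmetric] by (simp add: algebra_simps)
  also have "\<dots> \<in> \<int>" using assms unfolding good_def
    by (intro Ints_diff[OF Ints_mult[OF _ conjunct2[OF assms(1)[unfolded good_def]]] Ints_sum]) auto
  finally show ?thesis .
qed

lemma p_nested_finite: "finite F \<Longrightarrow> p_nested p k F"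
  unfolding p_nested_def by (rule exI[of _ F], rule exI[of _ "{}"]) auto

lemma p_nested_Un:
  assumes "p_nested p k A" "p_nested p k B" shows "p_nested p k (A \<union> B)"
proof -
  from assms obtain F1 Ss1 F2 Ss2 where
    "finite F1" "finite Ss1" "\<forall>S\<in>Ss1. \<exists>r\<le>k. elem_p_nested p r S" "A = F1 \<union> \<Union>Ss1"
    "finite F2" "finite Ss2" "\<forall>S\<in>Ss2. \<exists>r\<le>k. elem_p_nested p r S" "B = F2 \<union> \<Union>Ss2"
    unfolding p_nested_def by metis
  then show ?thesis unfolding p_nested_def
    by (intro exI[of _ "F1 \<union> F2"] exI[of _ "Ss1 \<union> Ss2"]) auto
qed

lemma p_nested_Union:
  assumes "finite X" "\<And>A. A \<in> X \<Longrightarrow> p_nested p k A" shows "p_nested p k (\<Union>X)"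
  using assms
proof (induction X rule: finite_induct)
  case empty then show ?case by (simp add: p_nested_finite)
next
  case (insert x F) then show ?case by (simp add: p_nested_Un)
qed

lemma p_nested_elem: "elem_p_nested p r S \<Longrightarrow> r \<le> k \<Longrightarrow> p_nested p k S"
  unfolding p_nested_def by (intro exI[of _ "{}"] exI[of _ "{S}"]) auto

lemma elem_fam:
  assumes "elem_p_nested p r S"
  shows "\<exists>e q c. e \<ge> 1 \<and> q = p ^ e \<and> r \<ge> 1 \<and> good q {1..r} (c 0) c \<and> S = fam q {1..r} (c 0) c"
proof -
  from assms obtain e q c where h: "e \<ge> 1" "q = p ^ e" "r \<ge> 1"
      "\<forall>i\<in>{0..r}. (of_nat q - 1) * c i \<in> \<int>"
      "(\<Sum>i=0..r. c i) \<in> \<int>" "S = Sq q r c"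
    unfolding elem_p_nested_def by blast
  have "(\<Sum>i=0..r. c i) = c 0 + sum c {1..r}"
    by (simp add: sum.atLeast_Suc_atMost)
  with h have "good q {1..r} (c 0) c" unfolding good_def by auto
  moreover have "S = fam q {1..r} (c 0) c" using h unfolding Sq_def fam_def by simp
  ultimately show ?thesis using h by blast
qed


lemma nat_le_of_rat: "of_nat n \<le> (x::rat) \<Longrightarrow> n \<le> nat \<lceil>x\<rceil>"
proof -
  assume a: "of_nat n \<le> x"
  have "of_int (int n) \<le> x" using a by simp
  then have "int n \<le> \<lceil>x\<rceil>" by (meson le_ceiling_iff order_refl le_of_int_ceiling of_int_le_iff order_trans)
  then show ?thesis by linarith
qed

lemma fam_cong_sum:
  assumes "\<And>t. (\<Sum>i\<in>J. d i * of_nat q ^ t i) = (\<Sum>i\<in>J'. d' i * of_nat q ^ t i)"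
  shows "fam q J d0 d = fam q J' d0 d'"
  using assms unfolding fam_def by simp

lemma fam_p_nested:
  assumes "e \<ge> 1" "q = p ^ e" "finite J" "good q J d0 d" "card {j\<in>J. d j \<noteq> 0} \<le> k"
  shows "p_nested p k (fam q J d0 d)"
proof -
  define J' where "J' = {j\<in>J. d j \<noteq> 0}"
  have fJ': "finite J'" "J' \<subseteq> J" using assms(3) unfolding J'_def by auto
  have sJ: "(\<Sum>i\<in>J. d i * of_nat q ^ t i) = (\<Sum>i\<in>J'. d i * of_nat q ^ t i)" for t :: "'a \<Rightarrow> nat"
    by (rule sum.mono_neutral_right[OF assms(3) fJ'(2)]) (auto simp: J'_def)
  have fe: "fam q J d0 d = fam q J' d0 d" by (rule fam_cong_sum[OF sJ])
  have sd: "sum d J = sum d J'"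
    by (rule sum.mono_neutral_right[OF assms(3) fJ'(2)]) (auto simp: J'_def)
  have gJ': "good q J' d0 d" using assms(4) fJ' unfolding good_def sd by auto
  show ?thesis
  proof (cases "\<exists>j\<in>J'. d j > 0")
    case False
    have "fam q J' d0 d \<subseteq> {..nat \<lceil>d0\<rceil>}"
    proof
      fix n assume "n \<in> fam q J' d0 d"
      then obtain t where t: "of_nat n = d0 + (\<Sum>i\<in>J'. d i * of_nat q ^ t i)" unfolding fam_def by auto
      have "(\<Sum>i\<in>J'. d i * of_nat q ^ t i) \<le> 0"
        using False by (intro sum_nonpos) (simp add: mult_nonpos_nonneg not_less)
      then have "of_nat n \<le> d0" using t by simp
      then show "n \<in> {..nat \<lceil>d0\<rceil>}" using nat_le_of_rat by auto
    qed
    then show ?thesis unfolding fe by (intro p_nested_finite) (auto intro: finite_subset)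
  next
    case True
    then obtain j0 where j0: "j0 \<in> J'" "d j0 > 0" by auto
    define r where "r = card J'"
    obtain g where g: "bij_betw g {1..r} J'" using ex_bij_betw_nat_finite_1[OF fJ'(1)] r_def by auto
    define h where "h = the_inv_into {1..r} g"
    have hg: "h (g i) = i" if "i \<in> {1..r}" for i
      using g that unfolding h_def bij_betw_def by (simp add: the_inv_into_f_f)
    have gh: "g (h j) = j" "h j \<in> {1..r}" if "j \<in> J'" for j
      using g that unfolding h_def bij_betw_def
      by (auto simp: f_the_inv_into_f the_inv_into_into the_inv_into_f_f)
    have r1: "r \<ge> 1" using j0 fJ' unfolding r_def by (metis One_nat_def Suc_leI card_gt_0_iff empty_iff)
    have rk: "r \<le> k" using assms(5) unfolding r_def J'_def .
    define c where "c i = (if i = 0 then d0 else d (g i))" for i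
    have ci: "c i = d (g i)" if "i \<in> {1..r}" for i using that unfolding c_def by auto
    have sumc: "(\<Sum>i=1..r. c i * of_nat q ^ ks i) = (\<Sum>i=1..r. d (g i) * of_nat q ^ ks i)" for ks
      by (rule sum.cong) (auto simp: ci)
    have Sqe: "Sq q r c = fam q J' d0 d"
    proof (intro set_eqI iffI)
      fix n assume "n \<in> Sq q r c"
      then obtain ks where ks: "of_nat n = c 0 + (\<Sum>i=1..r. c i * of_nat q ^ ks i)" unfolding Sq_def by auto
      have "(\<Sum>i\<in>J'. d i * of_nat q ^ (ks (h i))) = (\<Sum>i=1..r. d (g i) * of_nat q ^ ks (h (g i)))"
        by (rule sum.reindex_bij_betw[OF g, symmetric])
      also have "\<dots> = (\<Sum>i=1..r. d (g i) * of_nat q ^ ks i)" by (rule sum.cong) (auto simp: hg)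
      finally show "n \<in> fam q J' d0 d" unfolding fam_def using ks sumc
        by (intro CollectI exI[of _ "\<lambda>i. ks (h i)"]) (simp add: c_def)
    next
      fix n assume "n \<in> fam q J' d0 d"
      then obtain t where t: "of_nat n = d0 + (\<Sum>i\<in>J'. d i * of_nat q ^ t i)" unfolding fam_def by auto
      have "(\<Sum>i=1..r. d (g i) * of_nat q ^ t (g i)) = (\<Sum>i\<in>J'. d i * of_nat q ^ t i)"
        by (rule sum.reindex_bij_betw[OF g])
      then show "n \<in> Sq q r c" unfolding Sq_def using t sumc
        by (intro CollectI exI[of _ "\<lambda>i. t (g i)"]) (simp add: c_def)
    qed
    have gm: "g i \<in> J'" if "i \<in> {1..r}" for i using g that bij_betwE by blast
    have el: "elem_p_nested p r (Sq q r c)"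
      unfolding elem_p_nested_def
    proof (intro exI conjI)
      show "1 \<le> e" "q = p ^ e" "1 \<le> r" by (fact assms(1) assms(2) r1)+
      show "\<forall>i\<in>{0..r}. (of_nat q - 1) * c i \<in> \<int>"
      proof
        fix i assume "i \<in> {0..r}"
        show "(of_nat q - 1) * c i \<in> \<int>"
        proof (cases "i = 0")
          case True then show ?thesis using good_d0[OF gJ' fJ'(1)] by (simp add: c_def)
        next
          case False then have "i \<in> {1..r}" using \<open>i \<in> {0..r}\<close> by auto
          then show ?thesis using gJ' gm[of i] unfolding good_def by (simp add: ci)
        qed
      qed
      have "(\<Sum>i=0..r. c i) = c 0 + (\<Sum>i=1..r. c i)" by (simp add: sum.atLeast_Suc_atMost)
      also have "(\<Sum>i=1..r. c i) = (\<Sum>i=1..r. d (g i))" by (rule sum.cong) (auto simp: ci)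
      also have "\<dots> = sum d J'" by (rule sum.reindex_bij_betw[OF g])
      finally show "(\<Sum>i=0..r. c i) \<in> \<int>" using gJ' unfolding good_def by (simp add: c_def)
      show "\<forall>i\<in>{1..r}. c i \<noteq> 0" using gm by (auto simp: ci J'_def)
      show "\<exists>i\<in>{1..r}. c i > 0" using j0 gh[OF j0(1)] ci[of "h j0"] by force
    qed (rule refl)
    show ?thesis unfolding fe Sqe[symmetric] by (rule p_nested_elem[OF el rk])
  qed
qed


lemma sum_split_filter:
  assumes "finite A"
  shows "sum f A = sum f {x\<in>A. P x} + sum f {x\<in>A. \<not> P x}"
proof -
  have "A = {x\<in>A. P x} \<union> {x\<in>A. \<not> P x}" by auto
  then have "sum f A = sum f ({x\<in>A. P x} \<union> {x\<in>A. \<not> P x})" by simp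
  also have "\<dots> = sum f {x\<in>A. P x} + sum f {x\<in>A. \<not> P x}"
    by (rule sum.union_disjoint) (use assms in auto)
  finally show ?thesis .
qed

lemma refine_val:
  assumes "finite J"
    and "\<And>j. j \<in> J \<Longrightarrow> ch j < T0 \<Longrightarrow> t j = ch j"
    and "\<And>j. j \<in> J \<Longrightarrow> T0 \<le> ch j \<Longrightarrow> t j = ch j + P * u j"
  shows "(d0::rat) + (\<Sum>i\<in>J. d i * of_nat q ^ t i) =
    (d0 + (\<Sum>j\<in>{j\<in>J. ch j < T0}. d j * of_nat q ^ ch j)) +
    (\<Sum>j\<in>{j\<in>J. T0 \<le> ch j}. (d j * of_nat q ^ ch j) * of_nat (q ^ P) ^ u j)"
proof -
  have "(\<Sum>i\<in>J. d i * (of_nat q::rat) ^ t i) =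
     (\<Sum>i\<in>{j\<in>J. ch j < T0}. d i * of_nat q ^ t i) + (\<Sum>i\<in>{j\<in>J. \<not> ch j < T0}. d i * of_nat q ^ t i)"
    by (rule sum_split_filter[OF assms(1)])
  also have "(\<Sum>i\<in>{j\<in>J. ch j < T0}. d i * (of_nat q::rat) ^ t i) = (\<Sum>j\<in>{j\<in>J. ch j < T0}. d j * of_nat q ^ ch j)"
    by (rule sum.cong) (auto simp: assms(2))
  also have "(\<Sum>i\<in>{j\<in>J. \<not> ch j < T0}. d i * (of_nat q::rat) ^ t i) =
      (\<Sum>j\<in>{j\<in>J. T0 \<le> ch j}. (d j * of_nat q ^ ch j) * of_nat (q ^ P) ^ u j)"
    by (rule sum.cong) (auto simp: assms(3) power_add power_mult not_less)
  finally show ?thesis by simp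
qed

lemma fam_refine:
  assumes "P \<ge> 1" "finite J"
  shows "fam q J d0 d = (\<Union>ch \<in> PiE J (\<lambda>_. {..<T0+P}).
     fam (q^P) {j\<in>J. T0 \<le> ch j} (d0 + (\<Sum>j\<in>{j\<in>J. ch j < T0}. d j * of_nat q ^ ch j)) (\<lambda>j. d j * of_nat q ^ ch j))"
proof (intro set_eqI iffI)
  fix n assume "n \<in> fam q J d0 d"
  then obtain t where t: "of_nat n = d0 + (\<Sum>i\<in>J. d i * of_nat q ^ t i)" unfolding fam_def by auto
  define ch where "ch = restrict (\<lambda>j. if t j < T0 then t j else T0 + (t j - T0) mod P) J"
  define u where "u j = (t j - T0) div P" for j
  have chP: "ch \<in> PiE J (\<lambda>_. {..<T0+P})" unfolding ch_def using assms(1)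
    by (auto simp: PiE_def intro!: add_less_mono1)
  have "of_nat n = (d0 + (\<Sum>j\<in>{j\<in>J. ch j < T0}. d j * of_nat q ^ ch j)) +
    (\<Sum>j\<in>{j\<in>J. T0 \<le> ch j}. (d j * of_nat q ^ ch j) * of_nat (q ^ P) ^ u j)"
    unfolding t
  proof (rule refine_val[OF assms(2)])
    fix j assume "j \<in> J" "ch j < T0" then show "t j = ch j" unfolding ch_def
      by (auto split: if_splits)
  next
    fix j assume "j \<in> J" "T0 \<le> ch j" then show "t j = ch j + P * u j" unfolding ch_def u_def
      by (auto split: if_splits)
  qed
  then show "n \<in> (\<Union>ch \<in> PiE J (\<lambda>_. {..<T0+P}).
     fam (q^P) {j\<in>J. T0 \<le> ch j} (d0 + (\<Sum>j\<in>{j\<in>J. ch j < T0}. d j * of_nat q ^ ch j)) (\<lambda>j. d j * of_nat q ^ ch j))"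
    using chP unfolding fam_def by blast
next
  fix n assume "n \<in> (\<Union>ch \<in> PiE J (\<lambda>_. {..<T0+P}).
     fam (q^P) {j\<in>J. T0 \<le> ch j} (d0 + (\<Sum>j\<in>{j\<in>J. ch j < T0}. d j * of_nat q ^ ch j)) (\<lambda>j. d j * of_nat q ^ ch j))"
  then obtain ch u where chP: "ch \<in> PiE J (\<lambda>_. {..<T0+P})" and
    u: "of_nat n = (d0 + (\<Sum>j\<in>{j\<in>J. ch j < T0}. d j * of_nat q ^ ch j)) +
    (\<Sum>j\<in>{j\<in>J. T0 \<le> ch j}. (d j * of_nat q ^ ch j) * of_nat (q ^ P) ^ u j)"
    unfolding fam_def by blast
  define t where "t j = (if ch j < T0 then ch j else ch j + P * u j)" for j
  have "d0 + (\<Sum>i\<in>J. d i * of_nat q ^ t i) =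
    (d0 + (\<Sum>j\<in>{j\<in>J. ch j < T0}. d j * of_nat q ^ ch j)) +
    (\<Sum>j\<in>{j\<in>J. T0 \<le> ch j}. (d j * of_nat q ^ ch j) * of_nat (q ^ P) ^ u j)"
    by (rule refine_val[OF assms(2)]) (auto simp: t_def)
  then show "n \<in> fam q J d0 d" unfolding fam_def using u by (intro CollectI exI[of _ t]) simp
qed



definition inst :: "('i \<Rightarrow> 'i option) \<Rightarrow> ('i \<Rightarrow> nat) \<Rightarrow> ('i \<Rightarrow> nat) \<Rightarrow> 'i \<Rightarrow> nat" where
  "inst pp w t i = (case pp i of None \<Rightarrow> w i | Some C \<Rightarrow> t C + w i)"

definition valid :: "nat \<Rightarrow> 'i set \<Rightarrow> ('i \<Rightarrow> int) \<Rightarrow> int \<Rightarrow> ('i \<Rightarrow> 'i option) \<Rightarrow> ('i \<Rightarrow> nat) \<Rightarrow> bool" where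
  "valid q I al a0 pp w \<longleftrightarrow> a0 + (\<Sum>i\<in>{i\<in>I. pp i = None}. al i * int q ^ w i) = 0 \<and>
     (\<forall>C. (\<Sum>i\<in>{i\<in>I. pp i = Some C}. al i * int q ^ w i) = 0)"

definition KLP :: "nat \<Rightarrow> 'i set \<Rightarrow> ('i \<Rightarrow> int) \<Rightarrow> int \<Rightarrow> nat \<Rightarrow> bool" where
  "KLP q I al a0 B \<longleftrightarrow> (\<forall>x. a0 + (\<Sum>i\<in>I. al i * int q ^ x i) = 0 \<longrightarrow>
     (\<exists>pp w t. (\<forall>i\<in>I. w i \<le> B) \<and> (\<forall>i\<in>I. pp i \<in> insert None (Some ` I)) \<and>
        valid q I al a0 pp w \<and> (\<forall>i\<in>I. x i = inst pp w t i)))"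

lemma KLP_mono: "KLP q I al a0 B \<Longrightarrow> B \<le> B' \<Longrightarrow> KLP q I al a0 B'"
proof (unfold KLP_def, intro allI impI)
  fix x assume a: "\<forall>x. a0 + (\<Sum>i\<in>I. al i * int q ^ x i) = 0 \<longrightarrow>
     (\<exists>pp w t. (\<forall>i\<in>I. w i \<le> B) \<and> (\<forall>i\<in>I. pp i \<in> insert None (Some ` I)) \<and>
        valid q I al a0 pp w \<and> (\<forall>i\<in>I. x i = inst pp w t i))" "B \<le> B'"
    and e: "a0 + (\<Sum>i\<in>I. al i * int q ^ x i) = 0"
  from a(1) e obtain pp w t where h: "\<forall>i\<in>I. w i \<le> B" "\<forall>i\<in>I. pp i \<in> insert None (Some ` I)"
        "valid q I al a0 pp w" "\<forall>i\<in>I. x i = inst pp w t i" by blast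
  have "\<forall>i\<in>I. w i \<le> B'" using h(1) a(2) by (meson le_trans)
  with h show "\<exists>pp w t. (\<forall>i\<in>I. w i \<le> B') \<and> (\<forall>i\<in>I. pp i \<in> insert None (Some ` I)) \<and>
        valid q I al a0 pp w \<and> (\<forall>i\<in>I. x i = inst pp w t i)" by blast
qed

lemma valid_sound:
  assumes "finite I" "valid q I al a0 pp w"
  shows "a0 + (\<Sum>i\<in>I. al i * int q ^ inst pp w t i) = 0"
proof -
  let ?f = "\<lambda>i. al i * int q ^ inst pp w t i"
  have "sum ?f I = sum ?f {i\<in>I. pp i = None} + sum ?f {i\<in>I. pp i \<noteq> None}"
    by (rule sum_split_filter[OF assms(1)])
  also have "sum ?f {i\<in>I. pp i = None} = (\<Sum>i\<in>{i\<in>I. pp i = None}. al i * int q ^ w i)"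
    by (rule sum.cong) (auto simp: inst_def)
  also have "sum ?f {i\<in>I. pp i \<noteq> None} = 0"
  proof -
    let ?I' = "{i\<in>I. pp i \<noteq> None}"
    have fI': "finite ?I'" using assms(1) by auto
    have "sum ?f ?I' = (\<Sum>y\<in>pp ` ?I'. sum ?f {x\<in>?I'. pp x = y})"
      by (rule sum.group[OF fI' finite_imageI[OF fI'] subset_refl, symmetric])
    also have "\<dots> = 0"
    proof (rule sum.neutral, rule ballI)
      fix y assume "y \<in> pp ` ?I'"
      then obtain C where C: "y = Some C" by auto
      have "sum ?f {x\<in>?I'. pp x = y} = (\<Sum>i\<in>{i\<in>I. pp i = Some C}. int q ^ t C * (al i * int q ^ w i))"
        by (rule sum.cong) (auto simp: C inst_def power_add)
      also have "\<dots> = int q ^ t C * (\<Sum>i\<in>{i\<in>I. pp i = Some C}. al i * int q ^ w i)"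
        by (simp add: sum_distrib_left)
      also have "\<dots> = 0" using assms(2) unfolding valid_def by simp
      finally show "sum ?f {x\<in>?I'. pp x = y} = 0" .
    qed
    finally show ?thesis .
  qed
  finally show ?thesis using assms(2) unfolding valid_def by simp
qed


lemma KL:
  assumes "finite I" "q \<ge> 2"
  shows "\<exists>B. KLP q I al a0 B"
  using assms(1)
proof (induction "card I" arbitrary: I a0 rule: less_induct)
  case less
  show ?case
  proof (cases "I = {}")
    case True
    show ?thesis unfolding KLP_def
    proof (intro exI[of _ 0] allI impI)
      fix x assume "a0 + (\<Sum>i\<in>I. al i * int q ^ x i) = 0"
      then have "a0 = 0" using True by simp
      then show "\<exists>pp w t. (\<forall>i\<in>I. w i \<le> 0) \<and> (\<forall>i\<in>I. pp i \<in> insert None (Some ` I)) \<and>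
        valid q I al a0 pp w \<and> (\<forall>i\<in>I. x i = inst pp w t i)"
        using True by (auto simp: valid_def)
    qed
  next
    case nonempty: False
    have IH: "\<exists>B. KLP q (I - {i0}) al a B" if "i0 \<in> I" for i0 a
    proof -
      have "card (I - {i0}) < card I" using less.prems that by (rule card_Diff1_less)
      then show ?thesis using less.hyps[of "I - {i0}" a] less.prems by auto
    qed
    have "\<forall>ia. \<exists>B. fst ia \<in> I \<longrightarrow> KLP q (I - {fst ia}) al (snd ia) B" using IH by blast
    then obtain Bf0 where Bf0: "\<forall>ia. fst ia \<in> I \<longrightarrow> KLP q (I - {fst ia}) al (snd ia) (Bf0 ia)"
      by (metis choice)
    define Bf where "Bf i a = Bf0 (i, a)" for i a
    have Bf: "KLP q (I - {i}) al a (Bf i a)" if "i \<in> I" for i a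
      using Bf0 that unfolding Bf_def by auto
    define N where "N = nat \<bar>a0\<bar>"
    define B where "B = N + (\<Sum>i\<in>I. \<Sum>v<N. Bf i (a0 + al i * int q ^ v)) + (\<Sum>i\<in>I. Bf i (al i))"
    have B1: "Bf i (a0 + al i * int q ^ v) \<le> B" if "i \<in> I" "v < N" for i v
    proof -
      have "Bf i (a0 + al i * int q ^ v) \<le> (\<Sum>v<N. Bf i (a0 + al i * int q ^ v))"
        by (rule member_le_sum) (use that in auto)
      also have "\<dots> \<le> (\<Sum>i\<in>I. \<Sum>v<N. Bf i (a0 + al i * int q ^ v))"
        by (rule member_le_sum) (use that less.prems in auto)
      finally show ?thesis unfolding B_def by linarith
    qed
    have B2: "Bf i (al i) \<le> B" if "i \<in> I" for i
    proof -
      have "Bf i (al i) \<le> (\<Sum>i\<in>I. Bf i (al i))"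
        by (rule member_le_sum) (use that less.prems in auto)
      then show ?thesis unfolding B_def by linarith
    qed
    have B3: "N \<le> B" unfolding B_def by linarith
    show ?thesis unfolding KLP_def
    proof (intro exI[of _ B] allI impI)
      fix x assume eq: "a0 + (\<Sum>i\<in>I. al i * int q ^ x i) = 0"
      define m where "m = Min (x ` I)"
      have "m \<in> x ` I" unfolding m_def using less.prems nonempty by auto
      then obtain i0 where i0: "i0 \<in> I" "x i0 = m" by auto
      have mle: "m \<le> x i" if "i \<in> I" for i unfolding m_def using less.prems that by auto
      have dv: "int q ^ m dvd (\<Sum>i\<in>I. al i * int q ^ x i)"
      proof (rule dvd_sum)
        fix i assume "i \<in> I"
        then have "int q ^ x i = int q ^ m * int q ^ (x i - m)" using mle
          by (simp add: power_add[symmetric])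
        then show "int q ^ m dvd al i * int q ^ x i" by simp
      qed
      have rem: "(\<Sum>i\<in>I. f i) = f i0 + (\<Sum>i\<in>I - {i0}. f i)" for f :: "_ \<Rightarrow> int"
        using sum.remove[OF less.prems i0(1)] .
      let ?G = "\<exists>pp w t. (\<forall>i\<in>I. w i \<le> B) \<and> (\<forall>i\<in>I. pp i \<in> insert None (Some ` I)) \<and>
        valid q I al a0 pp w \<and> (\<forall>i\<in>I. x i = inst pp w t i)"
      show ?G
      proof (cases "a0 = 0")
        case False
        have "int q ^ m dvd a0" using dv eq
          by (metis add.commute add.right_neutral dvd_minus_iff eq_neg_iff_add_eq_0)
        then have "\<bar>int q ^ m\<bar> \<le> \<bar>a0\<bar>" using dvd_imp_le_int[OF False] by blast
        then have "int q ^ m \<le> \<bar>a0\<bar>" by simp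
        moreover have "int m < 2 ^ m" using less_exp[of m] by (metis of_nat_less_iff of_nat_numeral of_nat_power)
        moreover have "(2::int) ^ m \<le> int q ^ m" using assms(2) by (intro power_mono) auto
        ultimately have mN: "m < N" unfolding N_def by linarith
        define a' where "a' = a0 + al i0 * int q ^ m"
        have eq': "a' + (\<Sum>i\<in>I - {i0}. al i * int q ^ x i) = 0"
          using eq rem[of "\<lambda>i. al i * int q ^ x i"] i0 unfolding a'_def by simp
        from Bf[OF i0(1), of a'] eq' obtain pp w t where
          h: "\<forall>i\<in>I - {i0}. w i \<le> Bf i0 a'" "\<forall>i\<in>I - {i0}. pp i \<in> insert None (Some ` (I - {i0}))"
             "valid q (I - {i0}) al a' pp w" "\<forall>i\<in>I - {i0}. x i = inst pp w t i"
          unfolding KLP_def by blast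
        define pp2 where "pp2 = pp(i0 := None)"
        define w2 where "w2 = w(i0 := m)"
        show ?G
        proof (rule exI[of _ pp2], rule exI[of _ w2], rule exI[of _ t], intro conjI)
          show "\<forall>i\<in>I. w2 i \<le> B"
          proof
            fix i assume "i \<in> I"
            then show "w2 i \<le> B" using h(1) B1[OF i0(1) mN] mN B3 unfolding w2_def a'_def
              by (cases "i = i0") (auto intro: le_trans)
          qed
          show "\<forall>i\<in>I. pp2 i \<in> insert None (Some ` I)"
          proof
            fix i assume "i \<in> I"
            then show "pp2 i \<in> insert None (Some ` I)" using h(2) unfolding pp2_def
              by (cases "i = i0") auto
          qed
          show "\<forall>i\<in>I. x i = inst pp2 w2 t i"
          proof
            fix i assume "i \<in> I"
            show "x i = inst pp2 w2 t i"
            proof (cases "i = i0")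
              case True then show ?thesis using i0 by (simp add: pp2_def w2_def inst_def)
            next
              case False
              then have "inst pp2 w2 t i = inst pp w t i" by (simp add: pp2_def w2_def inst_def split: option.splits)
              then show ?thesis using h(4) \<open>i \<in> I\<close> False by simp
            qed
          qed
          have s1: "{i\<in>I. pp2 i = None} = insert i0 {i\<in>I - {i0}. pp i = None}"
            using i0 unfolding pp2_def by auto
          have s2: "{i\<in>I. pp2 i = Some C} = {i\<in>I - {i0}. pp i = Some C}" for C
            unfolding pp2_def by auto
          have fin: "finite {i\<in>I - {i0}. pp i = None}" using less.prems by auto
          have "(\<Sum>i\<in>{i\<in>I. pp2 i = None}. al i * int q ^ w2 i) =
              al i0 * int q ^ m + (\<Sum>i\<in>{i\<in>I - {i0}. pp i = None}. al i * int q ^ w i)"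
            unfolding s1 using fin by (simp add: w2_def)
          moreover have "(\<Sum>i\<in>{i\<in>I. pp2 i = Some C}. al i * int q ^ w2 i) =
              (\<Sum>i\<in>{i\<in>I - {i0}. pp i = Some C}. al i * int q ^ w i)" for C
            unfolding s2 by (rule sum.cong) (auto simp: w2_def)
          ultimately show "valid q I al a0 pp2 w2" using h(3) unfolding valid_def a'_def
            by (simp add: algebra_simps)
        qed
      next
        case True
        define y where "y i = x i - m" for i
        have "int q ^ m * (\<Sum>i\<in>I. al i * int q ^ y i) = (\<Sum>i\<in>I. al i * int q ^ x i)"
          unfolding sum_distrib_left
        proof (rule sum.cong)
          fix i assume "i \<in> I"
          then have "x i = m + y i" using mle unfolding y_def by auto
          then show "int q ^ m * (al i * int q ^ y i) = al i * int q ^ x i"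
            by (simp add: power_add)
        qed simp
        then have "(\<Sum>i\<in>I. al i * int q ^ y i) = 0" using eq True assms(2) by simp
        then have eq': "al i0 + (\<Sum>i\<in>I - {i0}. al i * int q ^ y i) = 0"
          using rem[of "\<lambda>i. al i * int q ^ y i"] i0 by (simp add: y_def)
        from Bf[OF i0(1), of "al i0"] eq' obtain pp w t where
          h: "\<forall>i\<in>I - {i0}. w i \<le> Bf i0 (al i0)" "\<forall>i\<in>I - {i0}. pp i \<in> insert None (Some ` (I - {i0}))"
             "valid q (I - {i0}) al (al i0) pp w" "\<forall>i\<in>I - {i0}. y i = inst pp w t i"
          unfolding KLP_def by blast
        define pp2 where "pp2 i = (if i = i0 then Some i0 else case pp i of None \<Rightarrow> Some i0 | Some C \<Rightarrow> Some C)" for i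
        define w2 where "w2 = w(i0 := 0)"
        define t2 where "t2 C = (if C = i0 then m else t C + m)" for C
        show ?G
        proof (rule exI[of _ pp2], rule exI[of _ w2], rule exI[of _ t2], intro conjI ballI)
          fix i assume "i \<in> I"
          then show "w2 i \<le> B" using h(1) B2[OF i0(1)] unfolding w2_def
            by (cases "i = i0") (auto intro: le_trans)
          show "pp2 i \<in> insert None (Some ` I)"
          proof (cases "i = i0")
            case False
            then have "i \<in> I - {i0}" using \<open>i \<in> I\<close> by auto
            then have "pp i \<in> insert None (Some ` I)" using h(2) by blast
            then show ?thesis using False i0 unfolding pp2_def by (auto split: option.splits)
          qed (use i0 in \<open>simp add: pp2_def\<close>)
          show "x i = inst pp2 w2 t2 i"
          proof (cases "i = i0")
            case True then show ?thesis using i0 by (simp add: pp2_def w2_def t2_def inst_def)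
          next
            case False
            then have iI: "i \<in> I - {i0}" using \<open>i \<in> I\<close> by auto
            have xi: "x i = m + y i" using mle[OF \<open>i \<in> I\<close>] unfolding y_def by auto
            show ?thesis
            proof (cases "pp i")
              case None then show ?thesis using h(4) iI xi False
                by (simp add: pp2_def w2_def t2_def inst_def)
            next
              case (Some C)
              have "pp i \<in> insert None (Some ` (I - {i0}))" using h(2) iI by blast
              then have "C \<noteq> i0" using Some by auto
              then show ?thesis using h(4) iI xi False Some
                by (simp add: pp2_def w2_def t2_def inst_def)
            qed
          qed
        next
          have s0: "{i\<in>I. pp2 i = None} = {}" unfolding pp2_def by (auto split: option.splits)
          have labs: "pp i \<noteq> Some i0" if "i \<in> I - {i0}" for i
          proof -
            have "pp i \<in> insert None (Some ` (I - {i0}))" using h(2) that by blast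
            then show ?thesis by auto
          qed
          have s1: "{i\<in>I. pp2 i = Some i0} = insert i0 {i\<in>I - {i0}. pp i = None}"
            using i0 labs unfolding pp2_def by (auto split: option.splits; metis option.exhaust)
          have s2: "{i\<in>I. pp2 i = Some C} = {i\<in>I - {i0}. pp i = Some C}" if "C \<noteq> i0" for C
            using that unfolding pp2_def by (auto split: option.splits)
          have fin: "finite {i\<in>I - {i0}. pp i = None}" using less.prems by auto
          have v1: "(\<Sum>i\<in>{i\<in>I. pp2 i = Some i0}. al i * int q ^ w2 i) = 0"
          proof -
            have "(\<Sum>i\<in>{i\<in>I. pp2 i = Some i0}. al i * int q ^ w2 i) =
              al i0 + (\<Sum>i\<in>{i\<in>I - {i0}. pp i = None}. al i * int q ^ w i)"
              unfolding s1 using fin by (simp add: w2_def)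
            then show ?thesis using h(3) unfolding valid_def by simp
          qed
          have v2: "(\<Sum>i\<in>{i\<in>I. pp2 i = Some C}. al i * int q ^ w2 i) = 0" if "C \<noteq> i0" for C
          proof -
            have "(\<Sum>i\<in>{i\<in>I. pp2 i = Some C}. al i * int q ^ w2 i) =
              (\<Sum>i\<in>{i\<in>I - {i0}. pp i = Some C}. al i * int q ^ w i)"
              unfolding s2[OF that] by (rule sum.cong) (auto simp: w2_def)
            then show ?thesis using h(3) unfolding valid_def by simp
          qed
          have v3: "(\<Sum>i\<in>{i\<in>I. pp2 i = Some C}. al i * int q ^ w2 i) = 0" for C
            using v1 v2 by (cases "C = i0") auto
          show "valid q I al a0 pp2 w2" unfolding valid_def using True v3 by (simp only: s0 sum.empty) simp
        qed
      qed
    qed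
  qed
qed


lemma floor_int_eq: "(x::rat) \<in> \<int> \<Longrightarrow> of_int \<lfloor>x\<rfloor> = x"
  by (metis Ints_cases floor_of_int)

lemma sum_Inl_Inr:
  assumes "finite J1" "finite J2"
  shows "(\<Sum>i\<in>Inl ` J1 \<union> Inr ` J2. f i) = (\<Sum>j\<in>J1. f (Inl j)) + (\<Sum>j\<in>J2. f (Inr j))"
proof -
  have "(\<Sum>i\<in>Inl ` J1 \<union> Inr ` J2. f i) = (\<Sum>i\<in>Inl ` J1. f i) + (\<Sum>i\<in>Inr ` J2. f i)"
    by (rule sum.union_disjoint) (use assms in auto)
  also have "(\<Sum>i\<in>Inl ` J1. f i) = (\<Sum>j\<in>J1. f (Inl j))" by (subst sum.reindex) (auto simp: inj_on_def)
  also have "(\<Sum>i\<in>Inr ` J2. f i) = (\<Sum>j\<in>J2. f (Inr j))" by (subst sum.reindex) (auto simp: inj_on_def)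
  finally show ?thesis .
qed

lemma group_identity:
  assumes "finite J1" "finite I" "\<And>j. j \<in> J1 \<Longrightarrow> pp (Inl j) \<in> insert None (Some ` I)"
  shows "(\<Sum>j\<in>J1. a j * (of_nat q::rat) ^ inst pp w t (Inl j)) =
     (\<Sum>j\<in>{j\<in>J1. pp (Inl j) = None}. a j * of_nat q ^ w (Inl j)) +
     (\<Sum>C\<in>I. (\<Sum>j\<in>{j\<in>J1. pp (Inl j) = Some C}. a j * of_nat q ^ w (Inl j)) * of_nat q ^ t C)"
proof -
  let ?h = "\<lambda>j. a j * (of_nat q::rat) ^ inst pp w t (Inl j)"
  let ?S = "{j\<in>J1. pp (Inl j) \<noteq> None}"
  have "sum ?h J1 = sum ?h {j\<in>J1. pp (Inl j) = None} + sum ?h ?S"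
    by (rule sum_split_filter[OF assms(1)])
  also have "sum ?h {j\<in>J1. pp (Inl j) = None} = (\<Sum>j\<in>{j\<in>J1. pp (Inl j) = None}. a j * of_nat q ^ w (Inl j))"
    by (rule sum.cong) (auto simp: inst_def)
  also have "sum ?h ?S = (\<Sum>C\<in>I. sum ?h {x\<in>?S. the (pp (Inl x)) = C})"
  proof (rule sum.group[symmetric])
    show "finite ?S" using assms(1) by auto
    show "finite I" by (fact assms(2))
    show "(\<lambda>x. the (pp (Inl x))) ` ?S \<subseteq> I" using assms(3) by force
  qed
  also have "\<dots> = (\<Sum>C\<in>I. (\<Sum>j\<in>{j\<in>J1. pp (Inl j) = Some C}. a j * of_nat q ^ w (Inl j)) * of_nat q ^ t C)"
  proof (rule sum.cong[OF refl])
    fix C assume "C \<in> I"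
    have e: "{x\<in>?S. the (pp (Inl x)) = C} = {j\<in>J1. pp (Inl j) = Some C}" by auto
    show "sum ?h {x\<in>?S. the (pp (Inl x)) = C} =
        (\<Sum>j\<in>{j\<in>J1. pp (Inl j) = Some C}. a j * of_nat q ^ w (Inl j)) * of_nat q ^ t C"
      unfolding e sum_distrib_right
      by (rule sum.cong) (auto simp: inst_def power_add)
  qed
  finally show ?thesis .
qed

lemma valid_restrict:
  "valid q I al a0 pp w \<Longrightarrow> valid q I al a0 (restrict pp I) (restrict w I)"
proof -
  assume v: "valid q I al a0 pp w"
  have s: "{i\<in>I. restrict pp I i = y} = {i\<in>I. pp i = y}" for y by auto
  have t: "(\<Sum>i\<in>{i\<in>I. pp i = y}. al i * int q ^ restrict w I i) = (\<Sum>i\<in>{i\<in>I. pp i = y}. al i * int q ^ w i)" for y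
    by (rule sum.cong) auto
  show ?thesis using v unfolding valid_def s t .
qed

lemma fam_inter_sameq:
  fixes J1 :: "'a set" and J2 :: "'b set"
  assumes "e \<ge> 1" "q = p ^ e" "q \<ge> 2" "finite J1" "finite J2"
    and g1: "good q J1 a0 a" and g2: "good q J2 b0 b" and "card J1 \<le> k"
  shows "p_nested p k (fam q J1 a0 a \<inter> fam q J2 b0 b)"
proof -
  define I where "I = Inl ` J1 \<union> Inr ` J2"
  have fI: "finite I" unfolding I_def using assms(4,5) by auto
  define al where "al = case_sum (\<lambda>j. \<lfloor>(of_nat q - 1) * a j\<rfloor>) (\<lambda>j. - \<lfloor>(of_nat q - 1) * b j\<rfloor>)"
  define a00 where "a00 = \<lfloor>(of_nat q - 1) * a0\<rfloor> - \<lfloor>(of_nat q - 1) * b0\<rfloor>"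
  have qr: "(of_nat q - 1 :: rat) \<noteq> 0" using assms(3) by simp
  have eqmap: "(of_int (a00 + (\<Sum>i\<in>I. al i * int q ^ X i)) :: rat) =
     (of_nat q - 1) * ((a0 + (\<Sum>j\<in>J1. a j * of_nat q ^ X (Inl j))) - (b0 + (\<Sum>j\<in>J2. b j * of_nat q ^ X (Inr j))))"
    for X
  proof -
    have s1: "(\<Sum>j\<in>J1. of_int (al (Inl j)) * of_nat q ^ X (Inl j)) = (\<Sum>j\<in>J1. (of_nat q - 1) * (a j * of_nat q ^ X (Inl j)))"
      by (rule sum.cong) (use g1 in \<open>auto simp: al_def good_def floor_int_eq\<close>)
    have s2: "(\<Sum>j\<in>J2. of_int (al (Inr j)) * of_nat q ^ X (Inr j)) = (\<Sum>j\<in>J2. - ((of_nat q - 1) * (b j * of_nat q ^ X (Inr j))))"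
      by (rule sum.cong) (use g2 in \<open>auto simp: al_def good_def floor_int_eq\<close>)
    have s0: "(of_int a00 :: rat) = (of_nat q - 1) * a0 - (of_nat q - 1) * b0"
      unfolding a00_def using good_d0[OF g1 assms(4)] good_d0[OF g2 assms(5)] by (simp add: floor_int_eq)
    have "(of_int (a00 + (\<Sum>i\<in>I. al i * int q ^ X i)) :: rat) =
      of_int a00 + ((\<Sum>j\<in>J1. of_int (al (Inl j)) * of_nat q ^ X (Inl j)) + (\<Sum>j\<in>J2. of_int (al (Inr j)) * of_nat q ^ X (Inr j)))"
      unfolding I_def by (simp add: sum_Inl_Inr[OF assms(4,5)])
    also have "\<dots> = ((of_nat q - 1) * a0 - (of_nat q - 1) * b0) + ((of_nat q - 1) * (\<Sum>j\<in>J1. a j * of_nat q ^ X (Inl j))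
        - (of_nat q - 1) * (\<Sum>j\<in>J2. b j * of_nat q ^ X (Inr j)))"
      unfolding s0 s1 s2 sum_negf sum_distrib_left by simp
    also have "\<dots> = (of_nat q - 1) * ((a0 + (\<Sum>j\<in>J1. a j * of_nat q ^ X (Inl j))) - (b0 + (\<Sum>j\<in>J2. b j * of_nat q ^ X (Inr j))))"
      by (simp add: algebra_simps)
    finally show ?thesis .
  qed
  obtain B where KB: "KLP q I al a00 B" using KL[OF fI assms(3)] by blast
  define Pats where "Pats = {pw \<in> PiE I (\<lambda>_. insert None (Some ` I)) \<times> PiE I (\<lambda>_. {..B}).
      valid q I al a00 (fst pw) (snd pw)}"
  have fP: "finite Pats" unfolding Pats_def
    by (rule finite_subset[of _ "PiE I (\<lambda>_. insert None (Some ` I)) \<times> PiE I (\<lambda>_. {..B})"])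
      (auto intro!: finite_PiE fI)
  define D0 where "D0 (pp :: ('a + 'b) \<Rightarrow> ('a + 'b) option) (w :: ('a + 'b) \<Rightarrow> nat) = a0 + (\<Sum>j\<in>{j\<in>J1. pp (Inl j) = None}. a j * of_nat q ^ w (Inl j))" for pp w
  define Dc where "Dc (pp :: ('a + 'b) \<Rightarrow> ('a + 'b) option) (w :: ('a + 'b) \<Rightarrow> nat) C = (\<Sum>j\<in>{j\<in>J1. pp (Inl j) = Some C}. a j * of_nat q ^ w (Inl j))" for pp w C
  define Out where "Out pw = fam q I (D0 (fst pw) (snd pw)) (Dc (fst pw) (snd pw))" for pw
  have labs: "pp (Inl j) \<in> insert None (Some ` I)" if "pw \<in> Pats" "pw = (pp, w)" "j \<in> J1" for pw pp w j
    using that unfolding Pats_def I_def by (auto simp: PiE_def Pi_def)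
  have ident: "a0 + (\<Sum>j\<in>J1. a j * of_nat q ^ inst pp w t (Inl j)) = D0 pp w + (\<Sum>C\<in>I. Dc pp w C * of_nat q ^ t C)"
    if "(pp, w) \<in> Pats" for pp w t
    unfolding D0_def Dc_def using group_identity[of J1 I pp a q w t, OF assms(4) fI labs[OF that refl]] by simp
  have main: "fam q J1 a0 a \<inter> fam q J2 b0 b = \<Union>(Out ` Pats)"
  proof (intro set_eqI iffI)
    fix n assume "n \<in> fam q J1 a0 a \<inter> fam q J2 b0 b"
    then obtain t1 t2 where t1: "of_nat n = a0 + (\<Sum>i\<in>J1. a i * of_nat q ^ t1 i)"
      and t2: "of_nat n = b0 + (\<Sum>i\<in>J2. b i * of_nat q ^ t2 i)" unfolding fam_def by auto
    define X where "X = case_sum t1 t2"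
    have "(of_int (a00 + (\<Sum>i\<in>I. al i * int q ^ X i)) :: rat) = 0"
      unfolding eqmap X_def using t1 t2 by simp
    then have "a00 + (\<Sum>i\<in>I. al i * int q ^ X i) = 0" by (simp only: of_int_eq_0_iff)
    then obtain pp w t where h: "\<forall>i\<in>I. w i \<le> B" "\<forall>i\<in>I. pp i \<in> insert None (Some ` I)"
        "valid q I al a00 pp w" "\<forall>i\<in>I. X i = inst pp w t i"
      using KB unfolding KLP_def by blast
    define pw where "pw = (restrict pp I, restrict w I)"
    have pwP: "pw \<in> Pats" unfolding pw_def Pats_def using h(1,2) valid_restrict[OF h(3)] by auto
    have "inst (restrict pp I) (restrict w I) t (Inl j) = t1 j" if "j \<in> J1" for j
    proof -
      have iI: "Inl j \<in> I" using that unfolding I_def by auto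
      have "inst (restrict pp I) (restrict w I) t (Inl j) = inst pp w t (Inl j)"
        using iI by (simp add: inst_def split: option.splits)
      moreover have "X (Inl j) = inst pp w t (Inl j)" using h(4) iI by blast
      ultimately show ?thesis by (simp add: X_def)
    qed
    then have "of_nat n = a0 + (\<Sum>j\<in>J1. a j * of_nat q ^ inst (restrict pp I) (restrict w I) t (Inl j))"
      unfolding t1 by simp
    also have "\<dots> = D0 (fst pw) (snd pw) + (\<Sum>C\<in>I. Dc (fst pw) (snd pw) C * of_nat q ^ t C)"
      using ident[of "restrict pp I" "restrict w I" t] pwP unfolding pw_def by simp
    finally have "n \<in> Out pw" unfolding Out_def fam_def by blast
    then show "n \<in> \<Union>(Out ` Pats)" using pwP by blast
  next
    fix n assume "n \<in> \<Union>(Out ` Pats)"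
    then obtain pp w where pwP: "(pp, w) \<in> Pats" and "n \<in> Out (pp, w)" by auto
    then obtain t where t: "of_nat n = D0 pp w + (\<Sum>C\<in>I. Dc pp w C * of_nat q ^ t C)"
      unfolding Out_def fam_def by auto
    then have n1: "of_nat n = a0 + (\<Sum>j\<in>J1. a j * of_nat q ^ inst pp w t (Inl j))"
      using ident[OF pwP] by simp
    have "valid q I al a00 pp w" using pwP unfolding Pats_def by auto
    then have "a00 + (\<Sum>i\<in>I. al i * int q ^ inst pp w t i) = 0" by (rule valid_sound[OF fI])
    then have "(of_int (a00 + (\<Sum>i\<in>I. al i * int q ^ inst pp w t i)) :: rat) = 0" by simp
    then have "b0 + (\<Sum>j\<in>J2. b j * of_nat q ^ inst pp w t (Inr j)) = a0 + (\<Sum>j\<in>J1. a j * of_nat q ^ inst pp w t (Inl j))"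
      unfolding eqmap using qr by simp
    then have n2: "of_nat n = b0 + (\<Sum>j\<in>J2. b j * of_nat q ^ inst pp w t (Inr j))" using n1 by simp
    have "n \<in> fam q J1 a0 a" unfolding fam_def using n1 by (intro CollectI exI[of _ "\<lambda>j. inst pp w t (Inl j)"])
    moreover have "n \<in> fam q J2 b0 b" unfolding fam_def using n2 by (intro CollectI exI[of _ "\<lambda>j. inst pp w t (Inr j)"])
    ultimately show "n \<in> fam q J1 a0 a \<inter> fam q J2 b0 b" by blast
  qed
  have outP: "p_nested p k (Out pw)" if "pw \<in> Pats" for pw
  proof -
    obtain pp w where pw: "pw = (pp, w)" by (cases pw)
    have P: "(pp, w) \<in> Pats" using that pw by simp
    have gd: "good q I (D0 pp w) (Dc pp w)" unfolding good_def
    proof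
      show "\<forall>j\<in>I. (of_nat q - 1) * Dc pp w j \<in> \<int>"
      proof
        fix C assume "C \<in> I"
        have "(of_nat q - 1) * Dc pp w C = (\<Sum>j\<in>{j\<in>J1. pp (Inl j) = Some C}. ((of_nat q - 1) * a j) * of_nat q ^ w (Inl j))"
          unfolding Dc_def sum_distrib_left by (simp add: mult.assoc)
        also have "\<dots> \<in> \<int>"
        proof (rule Ints_sum)
          fix j assume "j \<in> {j\<in>J1. pp (Inl j) = Some C}"
          then have "(of_nat q - 1) * a j \<in> \<int>" using g1 unfolding good_def by auto
          then show "((of_nat q - 1) * a j) * of_nat q ^ w (Inl j) \<in> \<int>" by (rule Ints_mult) auto
        qed
        finally show "(of_nat q - 1) * Dc pp w C \<in> \<int>" .
      qed
      have "D0 pp w + sum (Dc pp w) I = a0 + (\<Sum>j\<in>J1. a j * of_nat q ^ inst pp w (\<lambda>_. 0) (Inl j))"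
        using ident[OF P, of "\<lambda>_. 0"] by simp
      also have "\<dots> \<in> \<int>" by (rule good_val_int[OF g1])
      finally show "D0 pp w + sum (Dc pp w) I \<in> \<int>" .
    qed
    have "{C\<in>I. Dc pp w C \<noteq> 0} \<subseteq> (\<lambda>j. the (pp (Inl j))) ` {j\<in>J1. pp (Inl j) \<noteq> None}"
    proof
      fix C assume "C \<in> {C\<in>I. Dc pp w C \<noteq> 0}"
      then have nz: "Dc pp w C \<noteq> 0" by simp
      have "{j\<in>J1. pp (Inl j) = Some C} \<noteq> {}"
      proof
        assume "{j\<in>J1. pp (Inl j) = Some C} = {}"
        then have "Dc pp w C = 0" unfolding Dc_def by (simp only: sum.empty)
        then show False using nz by simp
      qed
      then obtain j where "j \<in> J1" "pp (Inl j) = Some C" by auto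
      then show "C \<in> (\<lambda>j. the (pp (Inl j))) ` {j\<in>J1. pp (Inl j) \<noteq> None}" by force
    qed
    then have "card {C\<in>I. Dc pp w C \<noteq> 0} \<le> card ((\<lambda>j. the (pp (Inl j))) ` {j\<in>J1. pp (Inl j) \<noteq> None})"
      by (rule card_mono[rotated]) (use assms(4) in auto)
    also have "\<dots> \<le> card {j\<in>J1. pp (Inl j) \<noteq> None}" by (rule card_image_le) (use assms(4) in auto)
    also have "\<dots> \<le> card J1" by (rule card_mono) (use assms(4) in auto)
    finally have "card {C\<in>I. Dc pp w C \<noteq> 0} \<le> k" using assms(8) by linarith
    then show ?thesis unfolding pw Out_def using fam_p_nested[OF assms(1,2) fI gd] by simp
  qed
  show ?thesis unfolding main by (rule p_nested_Union) (use fP outP in auto)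
qed


lemma fam_p_nested':
  assumes "e \<ge> 1" "q = p ^ e" "finite J" "good q J d0 d" "card J \<le> k"
  shows "p_nested p k (fam q J d0 d)"
proof -
  have "card {j\<in>J. d j \<noteq> 0} \<le> card J" by (rule card_mono) (use assms(3) in auto)
  then show ?thesis using fam_p_nested[OF assms(1-4)] assms(5) by simp
qed

lemma piece_good:
  assumes "good q J d0 d" "finite J"
  shows "good (q^P) {j\<in>J. T0 \<le> ch j} (d0 + (\<Sum>j\<in>{j\<in>J. ch j < T0}. d j * of_nat q ^ ch j)) (\<lambda>j. d j * of_nat q ^ ch j)"
  unfolding good_def
proof
  show "\<forall>j\<in>{j\<in>J. T0 \<le> ch j}. (of_nat (q ^ P) - 1) * (d j * of_nat q ^ ch j) \<in> \<int>"
  proof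
    fix j assume "j \<in> {j\<in>J. T0 \<le> ch j}"
    then have dj: "(of_nat q - 1) * d j \<in> \<int>" using assms(1) unfolding good_def by auto
    have e: "(of_nat q :: rat) ^ P - 1 = (of_nat q - 1) * (\<Sum>i<P. of_nat q ^ i)"
      by (rule power_diff_1_eq)
    have "(of_nat (q ^ P) - 1) * (d j * of_nat q ^ ch j) = ((of_nat q - 1) * d j) * (of_nat q ^ ch j * (\<Sum>i<P. (of_nat q :: rat) ^ i))"
      by (simp only: of_nat_power e) (simp add: algebra_simps)
    also have "\<dots> \<in> \<int>" by (rule Ints_mult[OF dj]) (intro Ints_mult Ints_sum Ints_power, auto)
    finally show "(of_nat (q ^ P) - 1) * (d j * of_nat q ^ ch j) \<in> \<int>" .
  qed
  have "(\<Sum>j\<in>J. d j * of_nat q ^ ch j) = (\<Sum>j\<in>{j\<in>J. ch j < T0}. d j * of_nat q ^ ch j) + (\<Sum>j\<in>{j\<in>J. \<not> ch j < T0}. d j * of_nat q ^ ch j)"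
    by (rule sum_split_filter[OF assms(2)])
  moreover have "{j\<in>J. \<not> ch j < T0} = {j\<in>J. T0 \<le> ch j}" by auto
  ultimately have "d0 + (\<Sum>j\<in>{j\<in>J. ch j < T0}. d j * of_nat q ^ ch j) + (\<Sum>j\<in>{j\<in>J. T0 \<le> ch j}. d j * of_nat q ^ ch j)
      = d0 + (\<Sum>j\<in>J. d j * of_nat q ^ ch j)" by simp
  also have "\<dots> \<in> \<int>" by (rule good_val_int[OF assms(1)])
  finally show "d0 + (\<Sum>j\<in>{j\<in>J. ch j < T0}. d j * of_nat q ^ ch j) + (\<Sum>j\<in>{j\<in>J. T0 \<le> ch j}. d j * of_nat q ^ ch j) \<in> \<int>" .
qed

lemma fam_pieces:
  fixes J :: "'a set"
  assumes "finite J" "good q J d0 d" "P \<ge> 1"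
  shows "\<exists>Ps. finite Ps \<and> fam q J d0 d = \<Union>Ps \<and>
    (\<forall>X\<in>Ps. \<exists>(J'::'a set) d0' d'. X = fam (q^P) J' d0' d' \<and> finite J' \<and> card J' \<le> card J \<and> good (q^P) J' d0' d')"
proof -
  let ?F = "\<lambda>ch. fam (q^P) {j\<in>J. 0 \<le> ch j} (d0 + (\<Sum>j\<in>{j\<in>J. ch j < 0}. d j * of_nat q ^ ch j)) (\<lambda>j. d j * of_nat q ^ ch j)"
  have e: "fam q J d0 d = \<Union>(?F ` PiE J (\<lambda>_. {..<0+P}))" using fam_refine[OF assms(3,1), of q d0 d 0] by simp
  show ?thesis
  proof (intro exI conjI)
    show "finite (?F ` PiE J (\<lambda>_. {..<0+P}))" using assms(1) by (auto intro!: finite_PiE)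
    show "fam q J d0 d = \<Union>(?F ` PiE J (\<lambda>_. {..<0+P}))" by (fact e)
    show "\<forall>X\<in>?F ` PiE J (\<lambda>_. {..<0+P}). \<exists>(J'::'a set) d0' d'. X = fam (q^P) J' d0' d' \<and> finite J' \<and> card J' \<le> card J \<and> good (q^P) J' d0' d'"
    proof
      fix X assume "X \<in> ?F ` PiE J (\<lambda>_. {..<0+P})"
      then obtain ch where X: "X = ?F ch" by auto
      define J' where "J' = {j\<in>J. 0 \<le> ch j}"
      define d0' where "d0' = d0 + (\<Sum>j\<in>{j\<in>J. ch j < 0}. d j * of_nat q ^ ch j)"
      define d' where "d' = (\<lambda>j. d j * of_nat q ^ ch j)"
      have "finite J'" "card J' \<le> card J" using assms(1) unfolding J'_def by (auto intro: card_mono)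
      moreover have "good (q^P) J' d0' d'" unfolding J'_def d0'_def d'_def
        by (rule piece_good[OF assms(2,1)])
      moreover have "X = fam (q^P) J' d0' d'" using X unfolding J'_def d0'_def d'_def by simp
      ultimately show "\<exists>(J'::'a set) d0' d'. X = fam (q^P) J' d0' d' \<and> finite J' \<and> card J' \<le> card J \<and> good (q^P) J' d0' d'"
        by blast
    qed
  qed
qed

lemma p_nested_inter_Union:
  assumes "finite A" "finite B" "\<And>X Y. X \<in> A \<Longrightarrow> Y \<in> B \<Longrightarrow> p_nested p k (X \<inter> Y)"
  shows "p_nested p k (\<Union>A \<inter> \<Union>B)"
proof -
  have "\<Union>A \<inter> \<Union>B = \<Union>((\<lambda>(X, Y). X \<inter> Y) ` (A \<times> B))" by auto
  also have "p_nested p k \<dots>" by (rule p_nested_Union) (use assms in auto)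
  finally show ?thesis .
qed

lemma elem_inter:
  assumes "prime p" "elem_p_nested p r S" "r \<le> k" "elem_p_nested p r' T" "r' \<le> k"
  shows "p_nested p k (S \<inter> T)"
proof -
  obtain e1 q1 c where h1: "e1 \<ge> 1" "q1 = p ^ e1" "good q1 {1..r} (c 0) c" "S = fam q1 {1..r} (c 0) c"
    using elem_fam[OF assms(2)] by blast
  obtain e2 q2 c' where h2: "e2 \<ge> 1" "q2 = p ^ e2" "good q2 {1..r'} (c' 0) c'" "T = fam q2 {1..r'} (c' 0) c'"
    using elem_fam[OF assms(4)] by blast
  define Q where "Q = p ^ (e1 * e2)"
  have Q1: "q1 ^ e2 = Q" unfolding Q_def h1(2) by (simp add: power_mult)
  have Q2: "q2 ^ e1 = Q" unfolding Q_def h2(2) power_mult[symmetric] by (simp add: mult.commute)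
  have p2: "p \<ge> 2" using assms(1) by (simp add: prime_ge_2_nat)
  have e12: "e1 * e2 \<ge> 1" using h1(1) h2(1) by simp
  have "p ^ 1 \<le> p ^ (e1 * e2)" by (rule power_increasing[OF e12]) (use p2 in auto)
  then have Q2': "Q \<ge> 2" unfolding Q_def using p2 by simp
  obtain Ps1 where P1: "finite Ps1" "fam q1 {1..r} (c 0) c = \<Union>Ps1"
    "\<forall>X\<in>Ps1. \<exists>(J'::nat set) d0' d'. X = fam Q J' d0' d' \<and> finite J' \<and> card J' \<le> card {1..r} \<and> good Q J' d0' d'"
    using fam_pieces[OF finite_atLeastAtMost h1(3) h2(1), unfolded Q1] by (elim exE conjE) blast
  obtain Ps2 where P2: "finite Ps2" "fam q2 {1..r'} (c' 0) c' = \<Union>Ps2"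
    "\<forall>X\<in>Ps2. \<exists>(J'::nat set) d0' d'. X = fam Q J' d0' d' \<and> finite J' \<and> card J' \<le> card {1..r'} \<and> good Q J' d0' d'"
    using fam_pieces[OF finite_atLeastAtMost h2(3) h1(1), unfolded Q2] by (elim exE conjE) blast
  show ?thesis unfolding h1(4) h2(4) P1(2) P2(2)
  proof (rule p_nested_inter_Union[OF P1(1) P2(1)])
    fix X Y assume XY: "X \<in> Ps1" "Y \<in> Ps2"
    have "\<exists>(J'::nat set) d0' d'. X = fam Q J' d0' d' \<and> finite J' \<and> card J' \<le> card {1..r} \<and> good Q J' d0' d'"
      by (rule bspec[OF P1(3) XY(1)])
    then obtain J1 :: "nat set" and a0 a where X: "X = fam Q J1 a0 a" "finite J1" "card J1 \<le> card {1..r}" "good Q J1 a0 a"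
      by (elim exE conjE) fast
    have "\<exists>(J'::nat set) d0' d'. Y = fam Q J' d0' d' \<and> finite J' \<and> card J' \<le> card {1..r'} \<and> good Q J' d0' d'"
      by (rule bspec[OF P2(3) XY(2)])
    then obtain J2 :: "nat set" and b0 b where Y: "Y = fam Q J2 b0 b" "finite J2" "good Q J2 b0 b"
      by (elim exE conjE) fast
    have "card J1 \<le> k" using X(3) assms(3) by simp
    then show "p_nested p k (X \<inter> Y)"
      unfolding X(1) Y(1) by (rule fam_inter_sameq[OF e12 Q_def Q2' X(2) Y(2) X(4) Y(3)])
  qed
qed


definition cls :: "nat \<Rightarrow> nat \<Rightarrow> nat set" where
  "cls m n = {x::nat. (of_nat x - of_nat m) / of_nat n \<in> (\<int> :: rat set)}"

lemma pigeon_pow: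
  assumes "N \<ge> (1::nat)"
  shows "\<exists>k1 k2. k1 < k2 \<and> q ^ k1 mod N = q ^ k2 mod N"
proof -
  let ?f = "\<lambda>k. q ^ k mod N"
  have "?f ` {..N} \<subseteq> {..<N}" using assms by auto
  then have "card (?f ` {..N}) \<le> N" by (metis card_lessThan card_mono finite_lessThan)
  then have "\<not> inj_on ?f {..N}" using card_image[of ?f "{..N}"] by auto
  then obtain x y where xy: "x \<noteq> y" "?f x = ?f y" unfolding inj_on_def by auto
  show ?thesis
  proof (cases "x < y")
    case True then show ?thesis using xy by blast
  next
    case False then have "y < x" using xy(1) by auto
    then show ?thesis using xy by metis
  qed
qed

lemma fam_inter_cls:
  fixes J :: "'a set"
  assumes "e \<ge> 1" "q = p ^ e" "q \<ge> 2" "finite J" "good q J d0 d" "card J \<le> k" "n \<ge> 1"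
  shows "p_nested p k (fam q J d0 d \<inter> cls m n)"
proof -
  define N where "N = (q - 1) * n"
  have N1: "N \<ge> 1" unfolding N_def using assms(3,7) by simp
  obtain k1 k2 where k12: "k1 < k2" "q ^ k1 mod N = q ^ k2 mod N" using pigeon_pow[OF N1] by blast
  define T0 where "T0 = k1"
  define P where "P = k2 - k1"
  have P1: "P \<ge> 1" unfolding P_def using k12 by simp
  have step: "q ^ (c + P) mod N = q ^ c mod N" if "c \<ge> T0" for c
  proof -
    have "q ^ (c + P) = q ^ (c - k1) * q ^ k2" unfolding P_def using that k12(1) T0_def
      by (simp add: power_add[symmetric])
    moreover have "q ^ c = q ^ (c - k1) * q ^ k1" using that T0_def by (simp add: power_add[symmetric])
    ultimately show ?thesis using k12(2) by (metis mod_mult_right_eq)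
  qed
  have per: "q ^ (c + P * u) mod N = q ^ c mod N" if "c \<ge> T0" for c u
  proof (induction u)
    case 0 then show ?case by simp
  next
    case (Suc u)
    have "q ^ (c + P * Suc u) = q ^ ((c + P * u) + P)" by (simp add: algebra_simps)
    then have "q ^ (c + P * Suc u) mod N = q ^ (c + P * u) mod N" using step[of "c + P * u"] that by simp
    then show ?case using Suc by simp
  qed
  have dv: "\<exists>w::nat. (of_nat q :: rat) ^ c * ((of_nat (q ^ P)) ^ u - 1) = (of_nat q - 1) * of_nat n * of_nat w"
    if "c \<ge> T0" for c u
  proof -
    have le: "q ^ c \<le> q ^ (c + P * u)" using assms(3) by (intro power_increasing) auto
    have "N dvd q ^ (c + P * u) - q ^ c" using per[OF that, of u] le by (simp add: mod_eq_dvd_iff_nat)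
    then obtain w where w: "q ^ (c + P * u) - q ^ c = N * w" by auto
    have "(of_nat q :: rat) ^ c * ((of_nat (q ^ P)) ^ u - 1) = of_nat (q ^ (c + P * u)) - of_nat (q ^ c)"
      by (simp add: power_add power_mult algebra_simps)
    also have "\<dots> = of_nat (q ^ (c + P * u) - q ^ c)" using le by (simp add: of_nat_diff)
    also have "\<dots> = of_nat N * of_nat w" unfolding w by simp
    also have "\<dots> = (of_nat q - 1) * of_nat n * of_nat w" unfolding N_def using assms(3) by (simp add: of_nat_diff)
    finally show ?thesis by blast
  qed
  let ?J' = "\<lambda>ch. {j\<in>J. T0 \<le> ch j}"
  let ?d0' = "\<lambda>ch. d0 + (\<Sum>j\<in>{j\<in>J. ch j < T0}. d j * of_nat q ^ ch j)"
  let ?d' = "\<lambda>ch j. d j * of_nat q ^ ch j"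
  let ?F = "\<lambda>ch. fam (q^P) (?J' ch) (?d0' ch) (?d' ch)"
  have e: "fam q J d0 d = \<Union>(?F ` PiE J (\<lambda>_. {..<T0+P}))" using fam_refine[OF P1 assms(4), of q d0 d T0] by simp
  have nU: "n \<noteq> 0" using assms(7) by simp
  have piece: "p_nested p k (?F ch \<inter> cls m n)" for ch
  proof -
    define v0 where "v0 = ?d0' ch + (\<Sum>j\<in>?J' ch. ?d' ch j)"
    have key: "(of_nat x - v0) / of_nat n \<in> \<int>" if xF: "x \<in> ?F ch" for x
    proof -
      obtain u where u: "of_nat x = ?d0' ch + (\<Sum>j\<in>?J' ch. ?d' ch j * of_nat (q^P) ^ u j)"
        using xF unfolding fam_def by blast
      have "(of_nat x - v0) / of_nat n = (\<Sum>j\<in>?J' ch. ?d' ch j * (of_nat (q^P) ^ u j - 1) / of_nat n)"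
        unfolding u v0_def by (simp add: sum_divide_distrib[symmetric] sum_subtractf[symmetric] algebra_simps)
      also have "\<dots> \<in> \<int>"
      proof (rule Ints_sum)
        fix j assume j: "j \<in> ?J' ch"
        then obtain w :: nat where w: "(of_nat q :: rat) ^ ch j * ((of_nat (q ^ P)) ^ u j - 1) = (of_nat q - 1) * of_nat n * of_nat w"
          using dv by auto
        have dj: "(of_nat q - 1) * d j \<in> \<int>" using assms(5) j unfolding good_def by auto
        have "?d' ch j * (of_nat (q^P) ^ u j - 1) / of_nat n = d j * ((of_nat q :: rat) ^ ch j * ((of_nat (q ^ P)) ^ u j - 1)) / of_nat n"
          by (simp add: algebra_simps)
        also have "\<dots> = ((of_nat q - 1) * d j) * of_nat w" unfolding w using nU by (simp add: field_simps)
        also have "\<dots> \<in> \<int>" by (rule Ints_mult[OF dj]) auto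
        finally show "?d' ch j * (of_nat (q^P) ^ u j - 1) / of_nat n \<in> \<int>" .
      qed
      finally show ?thesis .
    qed
    show ?thesis
    proof (cases "(v0 - of_nat m) / of_nat n \<in> \<int>")
      case True
      have "?F ch \<inter> cls m n = ?F ch"
      proof (intro set_eqI iffI)
        fix x assume x: "x \<in> ?F ch"
        have "(of_nat x - of_nat m) / of_nat n = (of_nat x - v0) / of_nat n + (v0 - of_nat m) / of_nat n"
          unfolding add_divide_distrib[symmetric] by simp
        also have "\<dots> \<in> \<int>" using key[OF x] True by (rule Ints_add)
        finally show "x \<in> ?F ch \<inter> cls m n" using x unfolding cls_def by auto
      qed auto
      moreover have "p_nested p k (?F ch)"
      proof (rule fam_p_nested'[of "e * P"])
        show "1 \<le> e * P" using assms(1) P1 by simp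
        show "q ^ P = p ^ (e * P)" using assms(2) by (simp add: power_mult)
        show "finite (?J' ch)" using assms(4) by auto
        show "good (q ^ P) (?J' ch) (?d0' ch) (?d' ch)" by (rule piece_good[OF assms(5,4)])
        have "card (?J' ch) \<le> card J" by (rule card_mono) (use assms(4) in auto)
        then show "card (?J' ch) \<le> k" using assms(6) by simp
      qed
      ultimately show ?thesis by simp
    next
      case False
      have "?F ch \<inter> cls m n = {}"
      proof (rule ccontr)
        assume "?F ch \<inter> cls m n \<noteq> {}"
        then obtain x where x: "x \<in> ?F ch" "x \<in> cls m n" by blast
        have "(v0 - of_nat m) / of_nat n = (of_nat x - of_nat m) / of_nat n - (of_nat x - v0) / of_nat n"
          unfolding diff_divide_distrib[symmetric] by simp
        also have "\<dots> \<in> \<int>" using x(2) key[OF x(1)] unfolding cls_def by (intro Ints_diff) auto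
        finally show False using False by simp
      qed
      then show ?thesis by (simp add: p_nested_finite)
    qed
  qed
  have "fam q J d0 d \<inter> cls m n = \<Union>((\<lambda>ch. ?F ch \<inter> cls m n) ` PiE J (\<lambda>_. {..<T0+P}))"
    unfolding e by auto
  also have "p_nested p k \<dots>"
    by (rule p_nested_Union) (use assms(4) piece in \<open>auto intro!: finite_PiE\<close>)
  finally show ?thesis .
qed


lemma elem_inter_cls:
  assumes "prime p" "elem_p_nested p r S" "r \<le> k" "n \<ge> 1"
  shows "p_nested p k (S \<inter> cls m n)"
proof -
  obtain e q c where h: "e \<ge> 1" "q = p ^ e" "good q {1..r} (c 0) c" "S = fam q {1..r} (c 0) c"
    using elem_fam[OF assms(2)] by blast
  have p2: "p \<ge> 2" using assms(1) by (simp add: prime_ge_2_nat)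
  have "p ^ 1 \<le> p ^ e" by (rule power_increasing[OF h(1)]) (use p2 in auto)
  then have q2: "q \<ge> 2" using p2 h(2) by simp
  show ?thesis unfolding h(4)
    by (rule fam_inter_cls[OF h(1,2) q2 finite_atLeastAtMost h(3) _ assms(4)]) (use assms(3) in simp)
qed

lemma p_nested_inter_gen:
  assumes "p_nested p k B" "\<And>S r. elem_p_nested p r S \<Longrightarrow> r \<le> k \<Longrightarrow> p_nested p k (S \<inter> X)"
  shows "p_nested p k (B \<inter> X)"
proof -
  obtain F Ss where h: "finite F" "finite Ss" "\<forall>S\<in>Ss. \<exists>r\<le>k. elem_p_nested p r S" "B = F \<union> \<Union>Ss"
    using assms(1) unfolding p_nested_def by blast
  have "B \<inter> X = (F \<inter> X) \<union> \<Union>((\<lambda>S. S \<inter> X) ` Ss)" unfolding h(4) by auto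
  also have "p_nested p k \<dots>"
  proof (rule p_nested_Un)
    show "p_nested p k (F \<inter> X)" using h(1) by (simp add: p_nested_finite)
    show "p_nested p k (\<Union>((\<lambda>S. S \<inter> X) ` Ss))"
    proof (rule p_nested_Union)
      show "finite ((\<lambda>S. S \<inter> X) ` Ss)" using h(2) by simp
      fix A assume "A \<in> (\<lambda>S. S \<inter> X) ` Ss"
      then obtain S where "S \<in> Ss" "A = S \<inter> X" by auto
      then show "p_nested p k A" using h(3) assms(2) by blast
    qed
  qed
  finally show ?thesis .
qed

lemma p_nested_inter:
  assumes "prime p" "p_nested p k B1" "p_nested p k B2"
  shows "p_nested p k (B1 \<inter> B2)"
proof (rule p_nested_inter_gen[OF assms(2)])
  fix S r assume S: "elem_p_nested p r S" "r \<le> k"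
  have "p_nested p k (B2 \<inter> S)"
  proof (rule p_nested_inter_gen[OF assms(3)])
    fix T r' assume "elem_p_nested p r' T" "r' \<le> k"
    then show "p_nested p k (T \<inter> S)" using elem_inter[OF assms(1) _ _ S] by blast
  qed
  then show "p_nested p k (S \<inter> B2)" by (simp add: Int_commute)
qed

lemma p_nested_inter_cls:
  assumes "prime p" "p_nested p k B" "n \<ge> 1"
  shows "p_nested p k (B \<inter> cls m n)"
  by (rule p_nested_inter_gen[OF assms(2)]) (rule elem_inter_cls[OF assms(1) _ _ assms(3)])

lemma ap_sub_cls: "{m + n * j | j. True} \<subseteq> cls m n"
  unfolding cls_def
proof safe
  fix j :: nat
  show "(of_nat (m + n * j) - of_nat m) / of_nat n \<in> (\<int> :: rat set)"
    by (cases "n = 0") auto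
qed

lemma cls_minus_ap: "n \<ge> 1 \<Longrightarrow> cls m n - {m + n * j | j. True} \<subseteq> {..<m}"
proof
  fix x assume n: "n \<ge> 1" and x: "x \<in> cls m n - {m + n * j | j. True}"
  show "x \<in> {..<m}"
  proof (rule ccontr)
    assume "x \<notin> {..<m}"
    then have xm: "x \<ge> m" by simp
    from x obtain z where z: "(of_nat x - of_nat m) / (of_nat n :: rat) = of_int z"
      unfolding cls_def by (auto elim: Ints_cases)
    have "(of_nat (x - m) :: rat) = of_nat n * of_int z" using z n xm by (simp add: field_simps of_nat_diff)
    then have "int (x - m) = int n * z" by (metis of_int_eq_iff of_int_mult of_int_of_nat_eq)
    moreover have "z \<ge> 0"
    proof (rule ccontr)
      assume "\<not> z \<ge> 0"
      then have "int n * z < 0" using n by (simp add: mult_pos_neg)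
      with \<open>int (x - m) = int n * z\<close> show False by simp
    qed
    ultimately have "x - m = n * nat z" by (metis nat_int nat_mult_distrib of_nat_0_le_iff nat_times_as_int int_nat_eq)
    then have "x = m + n * nat z" using xm by simp
    then show False using x by blast
  qed
qed

lemma ap_inter:
  assumes "n1 \<ge> 1" "n2 \<ge> 1" "{m1 + n1 * j | j. True} \<inter> {m2 + n2 * j | j. True} \<noteq> {}"
  shows "inf_arith_prog ({m1 + n1 * j | j. True} \<inter> {m2 + n2 * j | j. True})"
proof -
  let ?A = "{m1 + n1 * j | j. True} \<inter> {m2 + n2 * j | j. True}"
  obtain y where "y \<in> ?A" using assms(3) by blast
  define x0 where "x0 = (LEAST x. x \<in> ?A)"
  have x0A: "x0 \<in> ?A" unfolding x0_def using \<open>y \<in> ?A\<close> by (rule LeastI)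
  have x0le: "x0 \<le> x" if "x \<in> ?A" for x unfolding x0_def using that by (rule Least_le)
  define L where "L = lcm n1 n2"
  have L1: "L \<ge> 1" unfolding L_def using assms(1,2) by (simp add: Suc_le_eq lcm_pos_nat)
  have dvdA: "n dvd x - x0" if xA0: "x \<in> ?A" and nn0: "n = n1 \<or> n = n2" for x n
  proof -
    from nn0 show ?thesis
    proof
      assume nn: "n = n1"
      obtain a where "x = m1 + n1 * a" using xA0 by blast
      moreover obtain b where "x0 = m1 + n1 * b" using x0A by blast
      ultimately have "x - x0 = n1 * (a - b)" by (simp add: diff_mult_distrib2)
      then show ?thesis using nn by simp
    next
      assume nn: "n = n2"
      obtain a where "x = m2 + n2 * a" using xA0 by blast
      moreover obtain b where "x0 = m2 + n2 * b" using x0A by blast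
      ultimately have "x - x0 = n2 * (a - b)" by (simp add: diff_mult_distrib2)
      then show ?thesis using nn by simp
    qed
  qed
  have "?A = {x0 + L * j | j. True}"
  proof (intro set_eqI iffI)
    fix x assume xA: "x \<in> ?A"
    have "L dvd x - x0" unfolding L_def by (rule lcm_least) (use dvdA[OF xA] in auto)
    then obtain c where "x - x0 = L * c" by auto
    then have "x = x0 + L * c" using x0le[OF xA] by simp
    then show "x \<in> {x0 + L * j | j. True}" by blast
  next
    fix x assume "x \<in> {x0 + L * j | j. True}"
    then obtain j where xj: "x = x0 + L * j" by auto
    obtain c1 where c1: "L = n1 * c1" unfolding L_def by (metis dvd_lcm1 dvdE)
    obtain c2 where c2: "L = n2 * c2" unfolding L_def by (metis dvd_lcm2 dvdE)
    obtain a where ab1: "x0 = m1 + n1 * a" using x0A by blast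
    obtain b where ab2: "x0 = m2 + n2 * b" using x0A by blast
    have "x = m1 + n1 * (a + c1 * j)" using xj ab1 c1 by (simp add: algebra_simps)
    moreover have "x = m2 + n2 * (b + c2 * j)" using xj ab2 c2 by (simp add: algebra_simps)
    ultimately show "x \<in> ?A" by blast
  qed
  then show ?thesis unfolding inf_arith_prog_def using L1 by blast
qed


theorem lemma9p5:
  fixes p d :: nat and S1 S2 :: "nat set"
  assumes "prime p"
    and "p_normal p d S1"
    and "p_normal p d S2"
  shows "p_normal p d (S1 \<inter> S2)"
proof -
  obtain B1 As1 where h1: "p_nested p d B1" "finite As1" "\<forall>A\<in>As1. inf_arith_prog A"
      "finite ((S1 - (B1 \<union> \<Union>As1)) \<union> ((B1 \<union> \<Union>As1) - S1))"
    using assms(2) unfolding p_normal_def by blast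
  obtain B2 As2 where h2: "p_nested p d B2" "finite As2" "\<forall>A\<in>As2. inf_arith_prog A"
      "finite ((S2 - (B2 \<union> \<Union>As2)) \<union> ((B2 \<union> \<Union>As2) - S2))"
    using assms(3) unfolding p_normal_def by blast
  have "\<forall>A\<in>As1 \<union> As2. \<exists>mn. snd mn \<ge> 1 \<and> A = {fst mn + snd mn * j | j. True}"
  proof
    fix A assume "A \<in> As1 \<union> As2"
    then have "inf_arith_prog A" using h1(3) h2(3) by blast
    then obtain m n where "n \<ge> 1" "A = {m + n * j | j. True}" unfolding inf_arith_prog_def by blast
    then show "\<exists>mn. snd mn \<ge> 1 \<and> A = {fst mn + snd mn * j | j. True}" by (intro exI[of _ "(m, n)"]) simp
  qed
  from bchoice[OF this] obtain f where f: "\<forall>A\<in>As1 \<union> As2. snd (f A) \<ge> 1 \<and> A = {fst (f A) + snd (f A) * j | j. True}"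
    by blast
  define cl where "cl A = cls (fst (f A)) (snd (f A))" for A
  have Aeq: "A = {fst (f A) + snd (f A) * j | j. True}" "snd (f A) \<ge> 1" if "A \<in> As1 \<union> As2" for A
    using f that by auto
  have Acl: "A \<subseteq> cl A" if "A \<in> As1 \<union> As2" for A
  proof -
    have "{fst (f A) + snd (f A) * j | j. True} \<subseteq> cl A" unfolding cl_def by (rule ap_sub_cls)
    then show ?thesis using Aeq(1)[OF that] by simp
  qed
  have clfin: "finite (cl A - A)" if "A \<in> As1 \<union> As2" for A
  proof -
    have "cl A - {fst (f A) + snd (f A) * j | j. True} \<subseteq> {..<fst (f A)}" unfolding cl_def
      by (rule cls_minus_ap[OF Aeq(2)[OF that]])
    then have "cl A - A \<subseteq> {..<fst (f A)}" using Aeq(1)[OF that] by simp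
    then show ?thesis by (rule finite_subset) simp
  qed
  define U1 where "U1 = \<Union>As1"
  define U2 where "U2 = \<Union>As2"
  define T1 where "T1 = B1 \<union> U1"
  define T2 where "T2 = B2 \<union> U2"
  define Bn where "Bn = (B1 \<inter> B2) \<union> \<Union>((\<lambda>A. B1 \<inter> cl A) ` As2) \<union> \<Union>((\<lambda>A. B2 \<inter> cl A) ` As1)"
  define Asn where "Asn = {X. \<exists>A1 A2. A1 \<in> As1 \<and> A2 \<in> As2 \<and> A1 \<inter> A2 \<noteq> {} \<and> X = A1 \<inter> A2}"
  define E where "E = \<Union>((\<lambda>A. cl A - A) ` (As1 \<union> As2))"
  have Efin: "finite E" unfolding E_def using h1(2) h2(2) clfin by auto
  have Bn: "p_nested p d Bn" unfolding Bn_def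
  proof (intro p_nested_Un)
    show "p_nested p d (B1 \<inter> B2)" by (rule p_nested_inter[OF assms(1) h1(1) h2(1)])
    show "p_nested p d (\<Union>((\<lambda>A. B1 \<inter> cl A) ` As2))"
    proof (rule p_nested_Union)
      show "finite ((\<lambda>A. B1 \<inter> cl A) ` As2)" using h2(2) by simp
      fix X assume "X \<in> (\<lambda>A. B1 \<inter> cl A) ` As2"
      then obtain A where A: "A \<in> As2" "X = B1 \<inter> cl A" by auto
      then have "snd (f A) \<ge> 1" using f by auto
      then show "p_nested p d X" unfolding A(2) cl_def by (rule p_nested_inter_cls[OF assms(1) h1(1)])
    qed
    show "p_nested p d (\<Union>((\<lambda>A. B2 \<inter> cl A) ` As1))"
    proof (rule p_nested_Union)
      show "finite ((\<lambda>A. B2 \<inter> cl A) ` As1)" using h1(2) by simp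
      fix X assume "X \<in> (\<lambda>A. B2 \<inter> cl A) ` As1"
      then obtain A where A: "A \<in> As1" "X = B2 \<inter> cl A" by auto
      then have "snd (f A) \<ge> 1" using f by auto
      then show "p_nested p d X" unfolding A(2) cl_def by (rule p_nested_inter_cls[OF assms(1) h2(1)])
    qed
  qed
  have Asnfin: "finite Asn"
  proof (rule finite_subset)
    show "Asn \<subseteq> (\<lambda>(A1, A2). A1 \<inter> A2) ` (As1 \<times> As2)" unfolding Asn_def by auto
    show "finite ((\<lambda>(A1, A2). A1 \<inter> A2) ` (As1 \<times> As2))" using h1(2) h2(2) by simp
  qed
  have Asnap: "\<forall>A\<in>Asn. inf_arith_prog A"
  proof
    fix X assume "X \<in> Asn"
    then obtain A1 A2 where A: "A1 \<in> As1" "A2 \<in> As2" "A1 \<inter> A2 \<noteq> {}" "X = A1 \<inter> A2"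
      unfolding Asn_def by blast
    have f1: "snd (f A1) \<ge> 1" "A1 = {fst (f A1) + snd (f A1) * j | j. True}" using f A(1) by auto
    have f2: "snd (f A2) \<ge> 1" "A2 = {fst (f A2) + snd (f A2) * j | j. True}" using f A(2) by auto
    have e: "X = {fst (f A1) + snd (f A1) * j | j. True} \<inter> {fst (f A2) + snd (f A2) * j | j. True}"
      using A(4) f1(2) f2(2) by simp
    have ne: "X \<noteq> {}" using A(3,4) by simp
    show "inf_arith_prog X" unfolding e by (rule ap_inter[OF f1(1) f2(1)]) (use ne e in simp)
  qed
  have UA: "\<Union>Asn = U1 \<inter> U2" unfolding Asn_def U1_def U2_def by blast
  have sub1: "T1 \<inter> T2 \<subseteq> Bn \<union> \<Union>Asn"
  proof
    fix x assume x: "x \<in> T1 \<inter> T2"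
    show "x \<in> Bn \<union> \<Union>Asn"
    proof (cases "x \<in> U1 \<inter> U2")
      case True then show ?thesis using UA by blast
    next
      case False
      then consider "x \<in> B1 \<inter> B2" | "x \<in> B1 \<inter> U2" | "x \<in> U1 \<inter> B2" using x unfolding T1_def T2_def by blast
      then show ?thesis
      proof cases
        case 1 then show ?thesis unfolding Bn_def by blast
      next
        case 2
        then obtain A where "A \<in> As2" "x \<in> A" "x \<in> B1" unfolding U2_def by blast
        then have "x \<in> B1 \<inter> cl A" using Acl by blast
        then show ?thesis unfolding Bn_def using \<open>A \<in> As2\<close> by blast
      next
        case 3
        then obtain A where "A \<in> As1" "x \<in> A" "x \<in> B2" unfolding U1_def by blast
        then have "x \<in> B2 \<inter> cl A" using Acl by blast
        then show ?thesis unfolding Bn_def using \<open>A \<in> As1\<close> by blast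
      qed
    qed
  qed
  have sub2: "Bn \<union> \<Union>Asn \<subseteq> (T1 \<inter> T2) \<union> E"
  proof
    fix x assume x: "x \<in> Bn \<union> \<Union>Asn"
    show "x \<in> (T1 \<inter> T2) \<union> E"
    proof (cases "x \<in> E")
      case True then show ?thesis by blast
    next
      case notE: False
      have "x \<in> B1 \<inter> B2 \<or> x \<in> U1 \<inter> U2 \<or> (\<exists>A\<in>As2. x \<in> B1 \<inter> cl A) \<or> (\<exists>A\<in>As1. x \<in> B2 \<inter> cl A)"
        using x UA unfolding Bn_def by blast
      moreover have "x \<in> A" if "A \<in> As1 \<union> As2" "x \<in> cl A" for A
        using notE that unfolding E_def by blast
      ultimately show ?thesis unfolding T1_def T2_def U1_def U2_def by blast
    qed
  qed
  have D1: "finite ((S1 - T1) \<union> (T1 - S1))" using h1(4) unfolding T1_def U1_def .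
  have D2: "finite ((S2 - T2) \<union> (T2 - S2))" using h2(4) unfolding T2_def U2_def .
  have "(S1 \<inter> S2 - (Bn \<union> \<Union>Asn)) \<union> ((Bn \<union> \<Union>Asn) - S1 \<inter> S2) \<subseteq>
      ((S1 - T1) \<union> (T1 - S1)) \<union> ((S2 - T2) \<union> (T2 - S2)) \<union> E"
    using sub1 sub2 by blast
  then have "finite ((S1 \<inter> S2 - (Bn \<union> \<Union>Asn)) \<union> ((Bn \<union> \<Union>Asn) - S1 \<inter> S2))"
    by (rule finite_subset) (use D1 D2 Efin in simp)
  then show ?thesis unfolding p_normal_def using Bn Asnfin Asnap by blast
qed

end
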